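(* Let $\Omega\subset K$ be a simply connected domain, where $K=\mathbb{C}\setminus(-\infty,0]$. The following are equivalent: (a) there is a conformal map $f\colon\mathbb{H}\to\Omega$ with $\angle\lim_{z\to\infty}f(z)=\infty$ such that $\sqrt f$ is conformal at infinity, where $\sqrt{\cdot}$ is the branch mapping $K$ conformally onto the right half-plane; (b) there is a conformal map $g\colon K\to\Omega$ with $g(\infty)=\infty$ such that $\angle\lim_{w\to\infty}g(w)/w\in\mathbb{C}\setminus\{0\}$ (angular limit in $K$).
   Context: $\mathbb{H}$ is the upper half-plane. For a holomorphic $F\colon\mathbb{H}\to\mathbb{C}$, $\angle\lim_{z\to\infty}F(z)=\ell$ means $F(z)\to\ell$ as $z\to\infty$ within each sector $\{|\arg z-\pi/2|<\theta\}$, $\theta\in(0,\pi/2)$. A holomorphic $F\colon\mathbb{H}\to\mathbb{C}$ with $\angle\lim_{z\to\infty}F(z)=\infty$ is conformal at infinity if $\angle\lim_{z\to\infty}F(z)/z\in\mathbb{C}\setminus\{0\}$. For maps on $K$, angular limits at $\infty$ are taken as $w\to\infty$ within each sector $\{|\arg w|<\theta\}$, $\theta\in(0,\pi)$. *)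

theory Defs
  imports "HOL-Complex_Analysis.Complex_Analysis"
begin

definition upper_half_plane :: "complex set" where
  "upper_half_plane = {z. Im z > 0}"

definition slit_plane :: "complex set" where
  "slit_plane = {w. \<not> (Im w = 0 \<and> Re w \<le> 0)}"

definition H_sector :: "real \<Rightarrow> complex set" where
  "H_sector \<theta> = {z. z \<noteq> 0 \<and> \<bar>Arg z - pi/2\<bar> < \<theta>}"

definition K_sector :: "real \<Rightarrow> complex set" where
  "K_sector \<theta> = {w. w \<noteq> 0 \<and> \<bar>Arg w\<bar> < \<theta>}"

text \<open>Angular convergence at infinity in H towards the filter G
  (G = nhds l for a finite limit, G = at_infinity for the limit infinity).\<close>
definition ang_tendsto_H :: "(complex \<Rightarrow> complex) \<Rightarrow> complex filter \<Rightarrow> bool" where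
  "ang_tendsto_H F G \<longleftrightarrow>
     (\<forall>\<theta>. 0 < \<theta> \<and> \<theta> < pi/2 \<longrightarrow> filterlim F G (inf at_infinity (principal (H_sector \<theta>))))"

definition ang_tendsto_K :: "(complex \<Rightarrow> complex) \<Rightarrow> complex filter \<Rightarrow> bool" where
  "ang_tendsto_K F G \<longleftrightarrow>
     (\<forall>\<theta>. 0 < \<theta> \<and> \<theta> < pi \<longrightarrow> filterlim F G (inf at_infinity (principal (K_sector \<theta>))))"

definition conformal_at_infinity_H :: "(complex \<Rightarrow> complex) \<Rightarrow> bool" where
  "conformal_at_infinity_H F \<longleftrightarrow>
     ang_tendsto_H F at_infinity \<and> (\<exists>c. c \<noteq> 0 \<and> ang_tendsto_H (\<lambda>z. F z / z) (nhds c))"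

definition conformal_map_onto :: "(complex \<Rightarrow> complex) \<Rightarrow> complex set \<Rightarrow> complex set \<Rightarrow> bool" where
  "conformal_map_onto f A B \<longleftrightarrow> f holomorphic_on A \<and> inj_on f A \<and> f ` A = B"

end

theory Submission
  imports Defs
begin

lemma slit_iff: "w \<in> slit_plane \<longleftrightarrow> w \<notin> \<real>\<^sub>\<le>\<^sub>0"
  by (auto simp: slit_plane_def complex_nonpos_Reals_iff)

lemma Ksec_sub: assumes "\<theta> < pi" "w \<in> K_sector \<theta>" shows "w \<in> slit_plane"
proof -
  have w: "w \<noteq> 0" "\<bar>Arg w\<bar> < \<theta>" using assms by (auto simp: K_sector_def)
  show ?thesis
  proof (rule ccontr)
    assume "w \<notin> slit_plane"
    then have "w \<in> \<real>" "Re w < 0" using w(1) by (auto simp: slit_plane_def complex_is_Real_iff complex_eq_iff)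
    then have "Arg w = pi" by (simp add: Arg_real)
    then show False using w assms by simp
  qed
qed

lemma Hsec_sub: assumes "\<theta> \<le> pi/2" "z \<in> H_sector \<theta>" shows "z \<in> upper_half_plane"
proof -
  have "0 < Arg z \<and> Arg z < pi" using assms by (auto simp: H_sector_def)
  then show ?thesis using Arg_lt_pi upper_half_plane_def by auto
qed

lemma Arg_ii_mult: assumes "z \<noteq> 0" "-pi < Arg z + pi/2" "Arg z + pi/2 \<le> pi"
  shows "Arg (\<i> * z) = Arg z + pi/2"
  using Arg_times[of "\<i>" z] assms by auto

lemma Arg_mii_mult: assumes "z \<noteq> 0" "-pi < Arg z - pi/2" "Arg z - pi/2 \<le> pi"
  shows "Arg (-\<i> * z) = Arg z - pi/2"
  using Arg_times[of "-\<i>" z] assms by auto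

lemma phi_sector: assumes "\<theta> < pi" "w \<in> K_sector \<theta>"
  shows "\<i> * csqrt w \<in> H_sector (\<theta>/2)"
proof -
  have w: "w \<noteq> 0" "\<bar>Arg w\<bar> < \<theta>" using assms by (auto simp: K_sector_def)
  have "Arg (\<i> * csqrt w) = Arg w / 2 + pi/2"
    using Arg_ii_mult[of "csqrt w"] w assms by auto
  then show ?thesis using w by (auto simp: H_sector_def)
qed

lemma psi_sector: assumes "\<theta> < pi/2" "z \<in> H_sector \<theta>"
  shows "- (z^2) \<in> K_sector (2*\<theta>)"
proof -
  have z: "z \<noteq> 0" "\<bar>Arg z - pi/2\<bar> < \<theta>" using assms by (auto simp: H_sector_def)
  have a: "Arg (-\<i> * z) = Arg z - pi/2"
    using Arg_mii_mult[of z] z assms by auto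
  have "- (z^2) = (-\<i> * z) * (-\<i> * z)" by (simp add: power2_eq_square algebra_simps)
  moreover have "Arg ((-\<i> * z) * (-\<i> * z)) = 2 * (Arg z - pi/2)"
    using Arg_times[of "-\<i> * z" "-\<i> * z"] a z assms by auto
  ultimately show ?thesis using z by (auto simp: K_sector_def)
qed

lemma filt_gen: assumes "filterlim p at_infinity at_infinity" "\<forall>x\<in>A. p x \<in> B"
  shows "filterlim p (inf at_infinity (principal B)) (inf at_infinity (principal A))"
  unfolding filterlim_inf filterlim_principal
proof
  show "filterlim p at_infinity (inf at_infinity (principal A))"
    using filterlim_mono[OF assms(1) order_refl inf_le1] .
  show "\<forall>\<^sub>F x in inf at_infinity (principal A). p x \<in> B"
    unfolding eventually_inf_principal using assms(2) by (auto intro: always_eventually)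
qed

lemma phi_inf: "filterlim (\<lambda>w. \<i> * csqrt w) at_infinity at_infinity"
proof -
  have "filterlim (\<lambda>w::complex. norm w) at_top at_infinity"
    using filterlim_at_infinity_conv_norm_at_top[of "\<lambda>x. x" at_infinity] filterlim_ident by auto
  then have "filterlim (\<lambda>w::complex. sqrt (norm w)) at_top at_infinity"
    using filterlim_compose[OF sqrt_at_top] by blast
  then show ?thesis unfolding filterlim_at_infinity_conv_norm_at_top by (simp add: norm_mult)
qed

lemma psi_inf: "filterlim (\<lambda>z::complex. - (z^2)) at_infinity at_infinity"
proof -
  have "filterlim (\<lambda>w::complex. norm w) at_top at_infinity"
    using filterlim_at_infinity_conv_norm_at_top[of "\<lambda>x. x" at_infinity] filterlim_ident by auto
  then have "filterlim (\<lambda>w::complex. (norm w)^2) at_top at_infinity"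
    using filterlim_pow_at_top[of 2 "\<lambda>w::complex. norm w" at_infinity] by simp
  then show ?thesis unfolding filterlim_at_infinity_conv_norm_at_top by (simp add: norm_power)
qed

lemma csqrt_inf: "filterlim csqrt at_infinity at_infinity"
proof -
  have "filterlim (\<lambda>w::complex. norm w) at_top at_infinity"
    using filterlim_at_infinity_conv_norm_at_top[of "\<lambda>x. x" at_infinity] filterlim_ident by auto
  then have "filterlim (\<lambda>w::complex. sqrt (norm w)) at_top at_infinity"
    using filterlim_compose[OF sqrt_at_top] by blast
  then show ?thesis unfolding filterlim_at_infinity_conv_norm_at_top by simp
qed

lemma phi_filter: assumes "\<theta> < pi"
  shows "filterlim (\<lambda>w. \<i> * csqrt w) (inf at_infinity (principal (H_sector (\<theta>/2))))
     (inf at_infinity (principal (K_sector \<theta>)))"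
  by (rule filt_gen[OF phi_inf]) (use phi_sector assms in auto)

lemma psi_filter: assumes "\<theta> < pi/2"
  shows "filterlim (\<lambda>z. - (z^2)) (inf at_infinity (principal (K_sector (2*\<theta>))))
     (inf at_infinity (principal (H_sector \<theta>)))"
  by (rule filt_gen[OF psi_inf]) (use psi_sector assms in auto)

lemma sector_conn: assumes "0 \<le> R" "\<theta> \<le> pi/2"
  shows "connected {z \<in> H_sector \<theta>. R < norm z}"
proof -
  let ?p = "\<lambda>p::real\<times>real. complex_of_real (fst p) * cis (snd p)"
  let ?D = "{R<..} \<times> {pi/2-\<theta><..<pi/2+\<theta>}"
  have eq: "{z \<in> H_sector \<theta>. R < norm z} = ?p ` ?D"
  proof
    show "{z \<in> H_sector \<theta>. R < norm z} \<subseteq> ?p ` ?D"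
    proof
      fix z assume z: "z \<in> {z \<in> H_sector \<theta>. R < norm z}"
      have "z = ?p (norm z, Arg z)" using rcis_cmod_Arg[of z] by (simp add: rcis_def)
      moreover have "(norm z, Arg z) \<in> ?D" using z by (auto simp: H_sector_def)
      ultimately show "z \<in> ?p ` ?D" by blast
    qed
  next
    show "?p ` ?D \<subseteq> {z \<in> H_sector \<theta>. R < norm z}"
    proof
      fix z assume "z \<in> ?p ` ?D"
      then obtain r a where ra: "r > R" "a > pi/2-\<theta>" "a < pi/2+\<theta>" "z = of_real r * cis a" by auto
      have r0: "r > 0" using ra assms by auto
      have "Arg z = a" using Arg_unique'[of r a z] ra r0 assms by (auto simp: rcis_def)
      moreover have "norm z = r" using ra r0 by (simp add: norm_mult)
      moreover have "z \<noteq> 0" using ra r0 by simp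
      ultimately show "z \<in> {z \<in> H_sector \<theta>. R < norm z}" using ra by (auto simp: H_sector_def)
    qed
  qed
  have "connected ?D" by (intro convex_connected convex_Times) auto
  moreover have "continuous_on ?D ?p" by (intro continuous_intros)
  ultimately show ?thesis unfolding eq using connected_continuous_image by blast
qed

lemma Re_nz: assumes "norm (u^2 - 1) < 1/2" shows "Re u \<noteq> 0"
proof
  assume "Re u = 0"
  then have "Re (u^2 - 1) = -1 - Im u * Im u" by (simp add: power2_eq_square)
  moreover have "\<bar>Re (u^2 - 1)\<bar> \<le> norm (u^2 - 1)" by (rule abs_Re_le_cmod)
  ultimately show False using assms zero_le_square[of "Im u"] by linarith
qed

lemma sign_const: assumes "connected A" "continuous_on A k" "\<forall>z\<in>A. norm (k z ^2 - 1) < 1/2"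
  shows "(\<forall>z\<in>A. k z = csqrt (k z ^2)) \<or> (\<forall>z\<in>A. k z = - csqrt (k z ^2))"
proof -
  have nz: "\<forall>z\<in>A. Re (k z) \<noteq> 0" using assms(3) Re_nz by blast
  have "(\<forall>z\<in>A. Re (k z) > 0) \<or> (\<forall>z\<in>A. Re (k z) < 0)"
  proof (rule ccontr)
    assume "\<not> ?thesis"
    then obtain z1 z2 where z: "z1 \<in> A" "z2 \<in> A" "Re (k z1) < 0" "Re (k z2) > 0"
      using nz by (meson linorder_neqE_linordered_idom)
    have c: "connected (k ` A)" using connected_continuous_image assms by blast
    obtain y where "y \<in> k ` A" "inner 1 y = (0::real)"
      using connected_ivt_hyperplane[OF c, of "k z1" "k z2" 1 0] z by (auto simp: inner_complex_def)
    then show False using nz by (auto simp: inner_complex_def)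
  qed
  then show ?thesis
  proof
    assume "\<forall>z\<in>A. Re (k z) > 0"
    then show ?thesis by (auto intro!: csqrt_unique[symmetric])
  next
    assume h: "\<forall>z\<in>A. Re (k z) < 0"
    have "\<forall>z\<in>A. csqrt (k z ^2) = - k z"
    proof
      fix z assume "z \<in> A"
      then show "csqrt (k z ^2) = - k z" using h by (intro csqrt_unique) auto
    qed
    then show ?thesis by auto
  qed
qed

lemma sign_limit: fixes k :: "complex \<Rightarrow> complex"
  assumes "\<theta> \<le> pi/2" "continuous_on upper_half_plane k"
    "((\<lambda>z. k z ^2) \<longlongrightarrow> 1) (inf at_infinity (principal (H_sector \<theta>)))"
  shows "(k \<longlongrightarrow> 1) (inf at_infinity (principal (H_sector \<theta>))) \<or>
         (k \<longlongrightarrow> -1) (inf at_infinity (principal (H_sector \<theta>)))"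
proof -
  let ?F = "inf at_infinity (principal (H_sector \<theta>))"
  have "eventually (\<lambda>z. dist (k z ^2) 1 < 1/2) ?F"
    using assms(3) tendstoD[of _ 1 ?F "1/2"] by auto
  then obtain b where b: "\<And>z. b \<le> norm z \<Longrightarrow> z \<in> H_sector \<theta> \<Longrightarrow> norm (k z ^2 - 1) < 1/2"
    unfolding eventually_inf_principal eventually_at_infinity dist_norm by blast
  define A where "A = {z \<in> H_sector \<theta>. max b 0 < norm z}"
  have cA: "connected A" unfolding A_def by (rule sector_conn) (use assms in auto)
  have AH: "A \<subseteq> upper_half_plane" unfolding A_def using Hsec_sub assms(1) by auto
  have kA: "continuous_on A k" using continuous_on_subset[OF assms(2) AH] .
  have pA: "\<forall>z\<in>A. norm (k z ^2 - 1) < 1/2" using b unfolding A_def by auto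
  have evA: "eventually (\<lambda>z. z \<in> A) ?F"
    unfolding eventually_inf_principal eventually_at_infinity A_def
    by (rule exI[of _ "max b 0 + 1"]) auto
  have cs: "((\<lambda>z. csqrt (k z ^2)) \<longlongrightarrow> 1) ?F"
    using isCont_tendsto_compose[OF continuous_at_csqrt assms(3)] by (simp add: complex_nonpos_Reals_iff)
  from sign_const[OF cA kA pA] show ?thesis
  proof
    assume h: "\<forall>z\<in>A. k z = csqrt (k z ^2)"
    have "eventually (\<lambda>z. csqrt (k z ^2) = k z) ?F" using eventually_mono[OF evA] h by auto
    then show ?thesis using Lim_transform_eventually[OF cs] by blast
  next
    assume h: "\<forall>z\<in>A. k z = - csqrt (k z ^2)"
    have "eventually (\<lambda>z. - csqrt (k z ^2) = k z) ?F" using eventually_mono[OF evA] h by auto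
    then show ?thesis using Lim_transform_eventually[OF tendsto_minus[OF cs]] by blast
  qed
qed

lemma HF_nontriv: assumes "0 < \<theta>" shows "inf at_infinity (principal (H_sector \<theta>)) \<noteq> bot"
proof
  assume "inf at_infinity (principal (H_sector \<theta>)) = bot"
  then have "eventually (\<lambda>_. False) (inf at_infinity (principal (H_sector \<theta>)))" by simp
  then obtain b where b: "\<And>z. b \<le> norm z \<Longrightarrow> z \<in> H_sector \<theta> \<Longrightarrow> False"
    unfolding eventually_inf_principal eventually_at_infinity by blast
  define r where "r = \<bar>b\<bar> + 1"
  have r: "r > 0" "b \<le> r" unfolding r_def by auto
  let ?z = "of_real r * \<i>"
  have "Arg ?z = pi/2" using r by (subst Arg_times_of_real) auto
  then have "?z \<in> H_sector \<theta>" using assms r by (auto simp: H_sector_def)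
  moreover have "b \<le> norm ?z" using r by (simp add: norm_mult)
  ultimately show False using b by blast
qed

lemma HF_mono: assumes "\<theta>1 \<le> \<theta>2"
  shows "inf at_infinity (principal (H_sector \<theta>1)) \<le> inf at_infinity (principal (H_sector \<theta>2))"
  using assms by (intro inf_mono order_refl) (auto simp: H_sector_def)

lemma uniform_sign: fixes k :: "complex \<Rightarrow> complex"
  assumes "\<forall>\<theta>. 0 < \<theta> \<and> \<theta> < pi/2 \<longrightarrow> (k \<longlongrightarrow> 1) (inf at_infinity (principal (H_sector \<theta>))) \<or>
         (k \<longlongrightarrow> -1) (inf at_infinity (principal (H_sector \<theta>)))"
  shows "\<exists>\<sigma>. (\<sigma> = 1 \<or> \<sigma> = -1) \<and> (\<forall>\<theta>. 0 < \<theta> \<and> \<theta> < pi/2 \<longrightarrow> (k \<longlongrightarrow> \<sigma>) (inf at_infinity (principal (H_sector \<theta>))))"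
proof -
  have key: "(k \<longlongrightarrow> s) (inf at_infinity (principal (H_sector \<theta>)))"
    if s: "s = 1 \<or> s = -1" and t: "0 < \<theta>" "\<theta> < pi/2" and s0: "(k \<longlongrightarrow> s) (inf at_infinity (principal (H_sector (pi/4))))" for s \<theta>
  proof (rule ccontr)
    assume nt: "\<not> ?thesis"
    have "(k \<longlongrightarrow> -s) (inf at_infinity (principal (H_sector \<theta>)))" using assms t s nt by auto
    then have a: "(k \<longlongrightarrow> -s) (inf at_infinity (principal (H_sector (min \<theta> (pi/4)))))"
      by (rule tendsto_mono[rotated]) (rule HF_mono, simp)
    have b: "(k \<longlongrightarrow> s) (inf at_infinity (principal (H_sector (min \<theta> (pi/4)))))"
      using s0 by (rule tendsto_mono[rotated]) (rule HF_mono, simp)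
    have "-s = s" using tendsto_unique[OF HF_nontriv a b] t by simp
    then show False using s by auto
  qed
  have "0 < pi/4" "pi/4 < pi/2" by auto
  then consider "(k \<longlongrightarrow> 1) (inf at_infinity (principal (H_sector (pi/4))))"
    | "(k \<longlongrightarrow> -1) (inf at_infinity (principal (H_sector (pi/4))))" using assms by blast
  then show ?thesis
  proof cases
    case 1 then show ?thesis using key[of 1] by blast
  next
    case 2 then show ?thesis using key[of "-1"] by blast
  qed
qed

lemma phi_in_H: assumes "w \<in> slit_plane" shows "\<i> * csqrt w \<in> upper_half_plane"
proof -
  have "Re (csqrt w) > 0"
  proof (rule ccontr)
    assume "\<not> Re (csqrt w) > 0"
    then have r0: "Re (csqrt w) = 0" using Re_csqrt[of w] by linarith
    have "w = (csqrt w)^2" by simp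
    also have "(csqrt w)^2 = - complex_of_real (Im (csqrt w) * Im (csqrt w))"
      using r0 by (simp add: complex_eq_iff power2_eq_square)
    finally have "w = - complex_of_real (Im (csqrt w) * Im (csqrt w))" by simp
    moreover have "Im (csqrt w) * Im (csqrt w) \<ge> 0" by simp
    ultimately have "Im w = 0 \<and> Re w \<le> 0" by (metis Im_complex_of_real Re_complex_of_real uminus_complex.sel neg_0_equal_iff_equal neg_le_0_iff_le)
    then show False using assms unfolding slit_plane_def by blast
  qed
  then show ?thesis by (simp add: upper_half_plane_def)
qed

lemma psi_in_K: assumes "z \<in> upper_half_plane" shows "- (z^2) \<in> slit_plane"
proof -
  have y: "Im z > 0" using assms by (simp add: upper_half_plane_def)
  have e: "Im (- (z^2)) = - 2 * Re z * Im z" "Re (- (z^2)) = Im z * Im z - Re z * Re z"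
    by (simp_all add: power2_eq_square)
  have p: "Im z * Im z > 0" using y by simp
  have "\<not> (Im (- (z^2)) = 0 \<and> Re (- (z^2)) \<le> 0)"
  proof
    assume a: "Im (- (z^2)) = 0 \<and> Re (- (z^2)) \<le> 0"
    then have "Re z = 0" using e y by simp
    then show False using a e p by simp
  qed
  then show ?thesis unfolding slit_plane_def by blast
qed

lemma phi_psi: assumes "z \<in> upper_half_plane" shows "\<i> * csqrt (- (z^2)) = z"
proof -
  have "csqrt (- (z^2)) = - \<i> * z"
    using assms by (intro csqrt_unique) (auto simp: upper_half_plane_def power_mult_distrib)
  then show ?thesis by simp
qed

lemma psi_phi: "- ((\<i> * csqrt w)^2) = w"
  by (simp add: power_mult_distrib)

lemma phi_image: "(\<lambda>w. \<i> * csqrt w) ` slit_plane = upper_half_plane"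
proof
  show "(\<lambda>w. \<i> * csqrt w) ` slit_plane \<subseteq> upper_half_plane" using phi_in_H by auto
  show "upper_half_plane \<subseteq> (\<lambda>w. \<i> * csqrt w) ` slit_plane"
  proof
    fix z assume z: "z \<in> upper_half_plane"
    then show "z \<in> (\<lambda>w. \<i> * csqrt w) ` slit_plane"
      using phi_psi[OF z] psi_in_K[OF z] by (metis image_eqI)
  qed
qed

lemma psi_image: "(\<lambda>z. - (z^2)) ` upper_half_plane = slit_plane"
proof
  show "(\<lambda>z. - (z^2)) ` upper_half_plane \<subseteq> slit_plane" using psi_in_K by auto
  show "slit_plane \<subseteq> (\<lambda>z. - (z^2)) ` upper_half_plane"
  proof
    fix w assume w: "w \<in> slit_plane"
    then show "w \<in> (\<lambda>z. - (z^2)) ` upper_half_plane"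
      using psi_phi[of w] phi_in_H[OF w] by (metis image_eqI)
  qed
qed

lemma phi_inj: "inj_on (\<lambda>w. \<i> * csqrt w) A"
  by (rule inj_on_inverseI[where g = "\<lambda>z. - (z^2)"]) (rule psi_phi)

lemma psi_inj: "inj_on (\<lambda>z. - (z^2)) upper_half_plane"
  by (rule inj_on_inverseI[where g = "\<lambda>w. \<i> * csqrt w"]) (rule phi_psi)

lemma phi_holo: "(\<lambda>w. \<i> * csqrt w) holomorphic_on slit_plane"
  by (intro holomorphic_intros) (simp add: slit_iff)

lemma dir_ab:
  assumes fc: "conformal_map_onto f upper_half_plane \<Omega>" and fi: "ang_tendsto_H f at_infinity"
    and fs: "conformal_at_infinity_H (\<lambda>z. csqrt (f z))"
  shows "\<exists>g. conformal_map_onto g slit_plane \<Omega> \<and> ang_tendsto_K g at_infinity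
             \<and> (\<exists>c. c \<noteq> 0 \<and> ang_tendsto_K (\<lambda>w. g w / w) (nhds c))"
proof -
  define g where "g = (\<lambda>w. f (\<i> * csqrt w))"
  obtain c where c: "c \<noteq> 0" "ang_tendsto_H (\<lambda>z. csqrt (f z) / z) (nhds c)"
    using fs unfolding conformal_at_infinity_H_def by blast
  have fh: "f holomorphic_on upper_half_plane" "inj_on f upper_half_plane" "f ` upper_half_plane = \<Omega>"
    using fc unfolding conformal_map_onto_def by auto
  have "g holomorphic_on slit_plane"
  proof -
    have "(f \<circ> (\<lambda>w. \<i> * csqrt w)) holomorphic_on slit_plane"
      by (rule holomorphic_on_compose_gen[OF phi_holo fh(1)]) (use phi_image in auto)
    then show ?thesis by (simp add: g_def o_def)
  qed
  moreover have "inj_on g slit_plane"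
  proof -
    have "inj_on (f \<circ> (\<lambda>w. \<i> * csqrt w)) slit_plane"
      by (rule comp_inj_on[OF phi_inj]) (simp add: phi_image fh(2))
    then show ?thesis by (simp add: g_def o_def)
  qed
  moreover have "g ` slit_plane = \<Omega>"
  proof -
    have "g ` slit_plane = f ` ((\<lambda>w. \<i> * csqrt w) ` slit_plane)" unfolding g_def by auto
    then show ?thesis using phi_image fh(3) by simp
  qed
  moreover have "ang_tendsto_K g at_infinity"
    unfolding ang_tendsto_K_def
  proof (intro allI impI)
    fix \<theta> :: real assume t: "0 < \<theta> \<and> \<theta> < pi"
    have "filterlim f at_infinity (inf at_infinity (principal (H_sector (\<theta>/2))))"
      using fi t unfolding ang_tendsto_H_def by auto
    from filterlim_compose[OF this phi_filter] t
    show "filterlim g at_infinity (inf at_infinity (principal (K_sector \<theta>)))"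
      unfolding g_def by auto
  qed
  moreover have "ang_tendsto_K (\<lambda>w. g w / w) (nhds (- (c^2)))"
    unfolding ang_tendsto_K_def
  proof (intro allI impI)
    fix \<theta> :: real assume t: "0 < \<theta> \<and> \<theta> < pi"
    let ?F = "inf at_infinity (principal (K_sector \<theta>))"
    have "((\<lambda>z. csqrt (f z) / z) \<longlongrightarrow> c) (inf at_infinity (principal (H_sector (\<theta>/2))))"
      using c t unfolding ang_tendsto_H_def by auto
    from filterlim_compose[OF this phi_filter] t
    have "((\<lambda>w. csqrt (f (\<i> * csqrt w)) / (\<i> * csqrt w)) \<longlongrightarrow> c) ?F" by auto
    then have lim: "((\<lambda>w. - ((csqrt (f (\<i> * csqrt w)) / (\<i> * csqrt w))^2)) \<longlongrightarrow> - (c^2)) ?F"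
      by (intro tendsto_intros)
    have ev: "eventually (\<lambda>w. - ((csqrt (f (\<i> * csqrt w)) / (\<i> * csqrt w))^2) = g w / w) ?F"
      unfolding eventually_inf_principal
    proof (rule always_eventually, intro allI impI)
      fix w assume "w \<in> K_sector \<theta>"
      then have w: "w \<noteq> 0" by (auto simp: K_sector_def)
      show "- ((csqrt (f (\<i> * csqrt w)) / (\<i> * csqrt w))^2) = g w / w"
        using w by (simp add: g_def power_divide power_mult_distrib divide_simps)
    qed
    show "((\<lambda>w. g w / w) \<longlongrightarrow> - (c^2)) ?F"
      using Lim_transform_eventually[OF lim ev] .
  qed
  moreover have "- (c^2) \<noteq> 0" using c by simp
  ultimately show ?thesis unfolding conformal_map_onto_def by blast
qed

lemma dir_ba:
  assumes gc: "conformal_map_onto g slit_plane \<Omega>" and gi: "ang_tendsto_K g at_infinity"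
    and c: "c \<noteq> 0" "ang_tendsto_K (\<lambda>w. g w / w) (nhds c)" and sub: "\<Omega> \<subseteq> slit_plane"
  shows "\<exists>f. conformal_map_onto f upper_half_plane \<Omega> \<and> ang_tendsto_H f at_infinity
             \<and> conformal_at_infinity_H (\<lambda>z. csqrt (f z))"
proof -
  define f where "f = (\<lambda>z. g (- (z^2)))"
  have gh: "g holomorphic_on slit_plane" "inj_on g slit_plane" "g ` slit_plane = \<Omega>"
    using gc unfolding conformal_map_onto_def by auto
  have fhol: "f holomorphic_on upper_half_plane"
  proof -
    have "(g \<circ> (\<lambda>z. - (z^2))) holomorphic_on upper_half_plane"
      by (rule holomorphic_on_compose_gen[OF _ gh(1)]) (auto intro!: holomorphic_intros simp: psi_in_K)
    then show ?thesis by (simp add: f_def o_def)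
  qed
  moreover have "inj_on f upper_half_plane"
  proof -
    have "inj_on (g \<circ> (\<lambda>z. - (z^2))) upper_half_plane"
      by (rule comp_inj_on[OF psi_inj]) (simp add: psi_image gh(2))
    then show ?thesis by (simp add: f_def o_def)
  qed
  moreover have fim: "f ` upper_half_plane = \<Omega>"
  proof -
    have "f ` upper_half_plane = g ` ((\<lambda>z. - (z^2)) ` upper_half_plane)" unfolding f_def by auto
    then show ?thesis using psi_image gh(3) by simp
  qed
  moreover have fi: "ang_tendsto_H f at_infinity"
    unfolding ang_tendsto_H_def
  proof (intro allI impI)
    fix \<theta> :: real assume t: "0 < \<theta> \<and> \<theta> < pi/2"
    have "filterlim g at_infinity (inf at_infinity (principal (K_sector (2*\<theta>))))"
      using gi t unfolding ang_tendsto_K_def by auto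
    from filterlim_compose[OF this psi_filter] t
    show "filterlim f at_infinity (inf at_infinity (principal (H_sector \<theta>)))"
      unfolding f_def by auto
  qed
  moreover have "conformal_at_infinity_H (\<lambda>z. csqrt (f z))"
    unfolding conformal_at_infinity_H_def
  proof
    show "ang_tendsto_H (\<lambda>z. csqrt (f z)) at_infinity"
      unfolding ang_tendsto_H_def
    proof (intro allI impI)
      fix \<theta> :: real assume t: "0 < \<theta> \<and> \<theta> < pi/2"
      have "filterlim f at_infinity (inf at_infinity (principal (H_sector \<theta>)))"
        using fi t unfolding ang_tendsto_H_def by auto
      from filterlim_compose[OF csqrt_inf this]
      show "filterlim (\<lambda>z. csqrt (f z)) at_infinity (inf at_infinity (principal (H_sector \<theta>)))" .
    qed
    define d0 where "d0 = csqrt (- c)"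
    have d0: "d0 \<noteq> 0" "d0^2 = - c" using c unfolding d0_def by auto
    define k where "k = (\<lambda>z. csqrt (f z) / z / d0)"
    have kc: "continuous_on upper_half_plane k"
    proof -
      have fc: "continuous_on upper_half_plane f" using fhol holomorphic_on_imp_continuous_on by blast
      have "f ` upper_half_plane \<subseteq> -\<real>\<^sub>\<le>\<^sub>0" using fim sub slit_iff by auto
      then have "continuous_on upper_half_plane (\<lambda>z. csqrt (f z))"
        using continuous_on_compose2[OF continuous_on_csqrt fc] by blast
      moreover have "\<forall>z\<in>upper_half_plane. z \<noteq> 0" by (auto simp: upper_half_plane_def)
      ultimately show ?thesis unfolding k_def using d0
        by (intro continuous_intros) auto
    qed
    have "\<forall>\<theta>. 0 < \<theta> \<and> \<theta> < pi/2 \<longrightarrow> (k \<longlongrightarrow> 1) (inf at_infinity (principal (H_sector \<theta>))) \<or>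
         (k \<longlongrightarrow> -1) (inf at_infinity (principal (H_sector \<theta>)))"
    proof (intro allI impI)
      fix \<theta> :: real assume t: "0 < \<theta> \<and> \<theta> < pi/2"
      let ?F = "inf at_infinity (principal (H_sector \<theta>))"
      have "((\<lambda>w. g w / w) \<longlongrightarrow> c) (inf at_infinity (principal (K_sector (2*\<theta>))))"
        using c t unfolding ang_tendsto_K_def by auto
      from filterlim_compose[OF this psi_filter] t
      have "((\<lambda>z. g (- (z^2)) / (- (z^2))) \<longlongrightarrow> c) ?F" by auto
      then have lim: "((\<lambda>z. - (g (- (z^2)) / (- (z^2))) / (- c)) \<longlongrightarrow> - c / (- c)) ?F"
        by (intro tendsto_intros) (use c in auto)
      have ev: "eventually (\<lambda>z. - (g (- (z^2)) / (- (z^2))) / (- c) = k z ^2) ?F"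
        unfolding eventually_inf_principal
      proof (rule always_eventually, intro allI impI)
        fix z assume "z \<in> H_sector \<theta>"
        then have z: "z \<noteq> 0" by (auto simp: H_sector_def)
        show "- (g (- (z^2)) / (- (z^2))) / (- c) = k z ^2"
          using z d0 c by (simp add: k_def f_def power_divide power_mult_distrib)
      qed
      have "((\<lambda>z. k z ^2) \<longlongrightarrow> 1) ?F"
        using Lim_transform_eventually[OF lim ev] c by simp
      then show "(k \<longlongrightarrow> 1) ?F \<or> (k \<longlongrightarrow> -1) ?F"
        using sign_limit[OF _ kc] t by auto
    qed
    from uniform_sign[OF this] obtain \<sigma> where s: "\<sigma> = 1 \<or> \<sigma> = -1"
      "\<forall>\<theta>. 0 < \<theta> \<and> \<theta> < pi/2 \<longrightarrow> (k \<longlongrightarrow> \<sigma>) (inf at_infinity (principal (H_sector \<theta>)))" by blast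
    have "ang_tendsto_H (\<lambda>z. csqrt (f z) / z) (nhds (d0 * \<sigma>))"
      unfolding ang_tendsto_H_def
    proof (intro allI impI)
      fix \<theta> :: real assume t: "0 < \<theta> \<and> \<theta> < pi/2"
      have "((\<lambda>z. d0 * k z) \<longlongrightarrow> d0 * \<sigma>) (inf at_infinity (principal (H_sector \<theta>)))"
        using s t by (intro tendsto_intros) auto
      moreover have "(\<lambda>z. d0 * k z) = (\<lambda>z. csqrt (f z) / z)" using d0 by (auto simp: k_def)
      ultimately show "((\<lambda>z. csqrt (f z) / z) \<longlongrightarrow> d0 * \<sigma>) (inf at_infinity (principal (H_sector \<theta>)))" by simp
    qed
    moreover have "d0 * \<sigma> \<noteq> 0" using d0 s by auto
    ultimately show "\<exists>c. c \<noteq> 0 \<and> ang_tendsto_H (\<lambda>z. csqrt (f z) / z) (nhds c)" by blast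
  qed
  ultimately show ?thesis unfolding conformal_map_onto_def by blast
qed

theorem lemma5p8:
  fixes \<Omega> :: "complex set"
  assumes "open \<Omega>" and "connected \<Omega>" and "simply_connected \<Omega>"
    and "\<Omega> \<subseteq> slit_plane"
  shows "(\<exists>f. conformal_map_onto f upper_half_plane \<Omega> \<and> ang_tendsto_H f at_infinity
             \<and> conformal_at_infinity_H (\<lambda>z. csqrt (f z)))
     \<longleftrightarrow> (\<exists>g. conformal_map_onto g slit_plane \<Omega> \<and> ang_tendsto_K g at_infinity
             \<and> (\<exists>c. c \<noteq> 0 \<and> ang_tendsto_K (\<lambda>w. g w / w) (nhds c)))"
  using dir_ab dir_ba[OF _ _ _ _ assms(4)] by blast

end
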